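(* Let $K=\mathbb{R}$ and assume $\tau_{(i)}>0$, $\eta_{(i)}>-1$, $\eta_{(i)}\neq0$ for all $i\in\Omega$. For $X\subseteq\Omega$ and $D,A\in\mathcal{I}^{\mathbf{c}}(X)$ with $A\subsetneqq D$, we have $\pi(X,D)\neq\pi(X,A)$ and $\pi(X,D)\curlyeqprec\pi(X,A)$.
   Context: $\Omega$ is a finite set and $\mathbf{P}=(\Omega,\preccurlyeq_{\mathbf{P}})$ a poset. For $Y\subseteq\Omega$: $\max(Y)$ is the set of maximal elements of $Y$ w.r.t. $\preccurlyeq_{\mathbf{P}}$; $\mathcal{I}(Y)$ is the set of down-closed subsets of $Y$ with the induced order; $\mathcal{I}^{\mathbf{c}}(Y)$ is the set of up-closed subsets of $Y$. $\tau,\eta\in\mathbb{R}^{\Omega}$. For $D,I\subseteq\Omega$, $\varphi(D,I)=(-1)^{|I\cap D|}\big(\prod_{i\in I-\max(I)}\tau_{(i)}\big)\big(\prod_{i\in\max(I)-D}\eta_{(i)}\big)$ if $I\cap D\subseteq\max(I)$, and $0$ otherwise; for $D\subseteq Y\subseteq\Omega$, $\pi(Y,D)=\sum_{I\in\mathcal{I}(Y)}\varphi(D,I)x^{|I|}\in\mathbb{R}[x]$. For $f\in\mathbb{R}[x]$, $f_{(k)}$ is the coefficient of $x^k$. The total order $\curlyeqprec$ on $\mathbb{R}[x]$: $f\curlyeqprec g$ iff (i) $f=g$, or (ii) $\deg f\leqslant\deg g-1$, or (iii) $\deg f=\deg g$ and there exists $k\in\mathbb{N}$ with $f_{(k)}<g_{(k)}$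 and $f\equiv g\pmod{x^k}$. *)

theory Defs
  imports "HOL-Computational_Algebra.Polynomial"
begin

text \<open>The poset is given by a relation r (pairs (a,b) meaning a precedes-or-equals b).\<close>

definition maxs :: "('a \<times> 'a) set \<Rightarrow> 'a set \<Rightarrow> 'a set" where
  "maxs r Y = {y \<in> Y. \<forall>z\<in>Y. (y, z) \<in> r \<longrightarrow> z = y}"

definition downsets :: "('a \<times> 'a) set \<Rightarrow> 'a set \<Rightarrow> 'a set set" where
  "downsets r Y = {I. I \<subseteq> Y \<and> (\<forall>i\<in>I. \<forall>j\<in>Y. (j, i) \<in> r \<longrightarrow> j \<in> I)}"

definition upsets :: "('a \<times> 'a) set \<Rightarrow> 'a set \<Rightarrow> 'a set set" where
  "upsets r Y = {I. I \<subseteq> Y \<and> (\<forall>i\<in>I. \<forall>j\<in>Y. (i, j) \<in> r \<longrightarrow> j \<in> I)}"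

definition phi :: "('a \<times> 'a) set \<Rightarrow> ('a \<Rightarrow> real) \<Rightarrow> ('a \<Rightarrow> real) \<Rightarrow> 'a set \<Rightarrow> 'a set \<Rightarrow> real" where
  "phi r \<tau> \<eta> D I =
     (if I \<inter> D \<subseteq> maxs r I
      then (-1) ^ card (I \<inter> D) * (\<Prod>i\<in>I - maxs r I. \<tau> i) * (\<Prod>i\<in>maxs r I - D. \<eta> i)
      else 0)"

definition piP :: "('a \<times> 'a) set \<Rightarrow> ('a \<Rightarrow> real) \<Rightarrow> ('a \<Rightarrow> real) \<Rightarrow> 'a set \<Rightarrow> 'a set \<Rightarrow> real poly" where
  "piP r \<tau> \<eta> Y D = (\<Sum>I\<in>downsets r Y. monom (phi r \<tau> \<eta> D I) (card I))"

text \<open>Degree condition deg f \<le> deg g - 1 is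
  rendered as degree f < degree g (all polynomials compared in the theorem are nonzero,
  having constant coefficient 1).\<close>
definition poly_prec :: "real poly \<Rightarrow> real poly \<Rightarrow> bool" where
  "poly_prec f g \<longleftrightarrow>
     f = g \<or> degree f < degree g \<or>
     (degree f = degree g \<and>
      (\<exists>k::nat. coeff f k < coeff g k \<and> (\<forall>j<k. coeff f j = coeff g j)))"

end

theory Submission
  imports Defs
begin

lemma finite_downsets: "finite Y \<Longrightarrow> finite (downsets r Y)"
  by (rule finite_subset[of _ "Pow Y"]) (auto simp: downsets_def)

lemma coeff_piP:
  assumes "finite Y"
  shows "coeff (piP r \<tau> \<eta> Y D) k = (\<Sum>I\<in>{I\<in>downsets r Y. card I = k}. phi r \<tau> \<eta> D I)"
proof -
  have "coeff (piP r \<tau> \<eta> Y D) k = (\<Sum>I\<in>downsets r Y. if card I = k then phi r \<tau> \<eta> D I else 0)"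
    unfolding piP_def by (simp add: coeff_sum coeff_monom)
  also have "\<dots> = (\<Sum>I\<in>{I\<in>downsets r Y. card I = k}. phi r \<tau> \<eta> D I)"
    using finite_downsets[OF assms] by (simp add: sum.inter_filter)
  finally show ?thesis .
qed

definition mins :: "('a \<times> 'a) set \<Rightarrow> 'a set \<Rightarrow> 'a set" where
  "mins r Y = {y \<in> Y. \<forall>z\<in>Y. (z, y) \<in> r \<longrightarrow> z = y}"

lemma finite_I0: "finite X \<Longrightarrow> Y \<subseteq> X \<Longrightarrow> finite ((X - Y) \<union> mins r Y)"
  unfolding mins_def by (auto intro: finite_subset)

lemma phi_nz_subset:
  assumes "I \<in> downsets r X" "D \<subseteq> X" "phi r \<tau> \<eta> D I \<noteq> 0"
  shows "I \<subseteq> (X - D) \<union> mins r D"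
proof
  fix i assume i: "i \<in> I"
  have IX: "I \<subseteq> X" using assms(1) by (auto simp: downsets_def)
  have sub: "I \<inter> D \<subseteq> maxs r I" using assms(3) by (auto simp: phi_def split: if_splits)
  show "i \<in> (X - D) \<union> mins r D"
  proof (cases "i \<in> D")
    case False thus ?thesis using i IX by auto
  next
    case True
    have "\<forall>z\<in>D. (z, i) \<in> r \<longrightarrow> z = i"
    proof (intro ballI impI)
      fix z assume z: "z \<in> D" "(z, i) \<in> r"
      have "z \<in> I" using assms(1) i z assms(2) by (auto simp: downsets_def)
      hence "z \<in> maxs r I" using sub z by auto
      thus "z = i" using i z unfolding maxs_def by auto
    qed
    thus ?thesis using True by (auto simp: mins_def)
  qed
qed

lemma I0_downset:
  assumes "A \<in> upsets r X"
  shows "(X - A) \<union> mins r A \<in> downsets r X"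
  using assms unfolding downsets_def upsets_def mins_def by blast

lemma I0_maxs:
  assumes "A \<in> upsets r X"
  shows "((X - A) \<union> mins r A) \<inter> A \<subseteq> maxs r ((X - A) \<union> mins r A)"
proof
  fix m assume m: "m \<in> ((X - A) \<union> mins r A) \<inter> A"
  hence mA: "m \<in> mins r A" by auto
  have "\<forall>z\<in>(X - A) \<union> mins r A. (m, z) \<in> r \<longrightarrow> z = m"
  proof (intro ballI impI)
    fix z assume z: "z \<in> (X - A) \<union> mins r A" "(m, z) \<in> r"
    have "z \<in> X" using z assms unfolding upsets_def mins_def by auto
    hence "z \<in> A" using assms mA z(2) unfolding upsets_def mins_def by auto
    hence "z \<in> mins r A" using z by auto
    thus "z = m" using z(2) mA unfolding mins_def by auto
  qed
  thus "m \<in> maxs r ((X - A) \<union> mins r A)" using m unfolding maxs_def by auto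
qed

lemma phi_I0_nz:
  assumes "A \<in> upsets r X" "X \<subseteq> \<Omega>" "\<forall>i\<in>\<Omega>. \<tau> i > 0" "\<forall>i\<in>\<Omega>. \<eta> i \<noteq> 0" "finite X"
  shows "phi r \<tau> \<eta> A ((X - A) \<union> mins r A) \<noteq> 0"
proof -
  let ?I = "(X - A) \<union> mins r A"
  have IX: "?I \<subseteq> X" using assms(1) unfolding upsets_def mins_def by auto
  have mI: "maxs r ?I \<subseteq> ?I" unfolding maxs_def by auto
  have fI: "finite ?I" using IX assms(5) finite_subset by blast
  have "(\<Prod>i\<in>?I - maxs r ?I. \<tau> i) \<noteq> 0"
    using fI IX assms(2,3) by (subst prod_zero_iff) (auto dest: less_imp_neq[symmetric] )
  moreover have "(\<Prod>i\<in>maxs r ?I - A. \<eta> i) \<noteq> 0"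
  proof -
    have "finite (maxs r ?I - A)" using mI fI by (meson Diff_subset finite_subset subset_trans)
    thus ?thesis using IX assms(2,4) mI by (subst prod_zero_iff) auto
  qed
  ultimately show ?thesis using I0_maxs[OF assms(1)] unfolding phi_def by simp
qed

lemma phi_eq:
  assumes "A \<subseteq> D" "I \<inter> (D - A) = {}"
  shows "phi r \<tau> \<eta> D I = phi r \<tau> \<eta> A I"
proof -
  have 1: "I \<inter> D = I \<inter> A" using assms by auto
  have 2: "maxs r I - D = maxs r I - A" using assms unfolding maxs_def by auto
  show ?thesis unfolding phi_def 1 2 ..
qed

lemma phi_lt:
  assumes po: "partial_order_on \<Omega> r" and XO: "X \<subseteq> \<Omega>"
    and tau: "\<forall>i\<in>\<Omega>. \<tau> i > 0" and eta: "\<forall>i\<in>\<Omega>. \<eta> i > -1"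
    and D: "D \<in> upsets r X" and A: "A \<in> upsets r X" and AD: "A \<subseteq> D"
    and fX: "finite X"
    and I: "I \<in> downsets r X" "I \<inter> (D - A) \<noteq> {}"
    and mn: "\<And>J. J \<in> downsets r X \<Longrightarrow> J \<inter> (D - A) \<noteq> {} \<Longrightarrow> card I \<le> card J"
  shows "phi r \<tau> \<eta> D I < phi r \<tau> \<eta> A I"
proof -
  have refl: "refl_on \<Omega> r" and trans: "trans r" and anti: "antisym r"
    using po unfolding partial_order_on_def preorder_on_def by auto
  have IX: "I \<subseteq> X" using I(1) unfolding downsets_def by auto
  have fI: "finite I" using IX fX finite_subset by blast
  have DX: "D \<subseteq> X" and AX: "A \<subseteq> X" using D A unfolding upsets_def by auto
  define dn where "dn = (\<lambda>d. {j\<in>X. (j, d) \<in> r})"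
  have dn_down: "dn d \<in> downsets r X" for d
    using trans unfolding dn_def downsets_def by (auto dest: transD)
  have dn_in: "d \<in> dn d" if "d \<in> X" for d
    using that XO refl unfolding dn_def refl_on_def by auto
  have dn_sub: "dn d \<subseteq> I" if "d \<in> I" for d
    using that I(1) unfolding dn_def downsets_def by auto
  have dn_eq: "dn d = I" if "d \<in> I" "d \<in> D - A" for d
  proof -
    have "card I \<le> card (dn d)" using mn[OF dn_down] dn_in that IX by blast
    thus ?thesis using dn_sub[OF that(1)] fI by (meson card_seteq)
  qed
  obtain d where d: "d \<in> I" "d \<in> D - A" using I(2) by auto
  have Id: "I = dn d" using dn_eq[OF d] by simp
  have IA: "I \<inter> A = {}"
  proof (rule ccontr)
    assume "I \<inter> A \<noteq> {}"
    then obtain j where j: "j \<in> I" "j \<in> A" by auto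
    hence "(j, d) \<in> r" using Id unfolding dn_def by auto
    hence "d \<in> A" using A j d IX unfolding upsets_def by auto
    thus False using d by auto
  qed
  have ID: "I \<inter> D = {d}"
  proof
    show "{d} \<subseteq> I \<inter> D" using d by auto
    show "I \<inter> D \<subseteq> {d}"
    proof
      fix j assume j: "j \<in> I \<inter> D"
      hence jDA: "j \<in> D - A" using IA by auto
      have "dn j = I" using dn_eq[of j] j jDA by auto
      hence "(d, j) \<in> r" using d unfolding dn_def by auto
      moreover have "(j, d) \<in> r" using j Id unfolding dn_def by auto
      ultimately show "j \<in> {d}" using anti unfolding antisym_def by auto
    qed
  qed
  have M: "maxs r I = {d}"
  proof
    show "maxs r I \<subseteq> {d}"
    proof
      fix m assume m: "m \<in> maxs r I"
      hence "(m, d) \<in> r" using Id unfolding maxs_def dn_def by auto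
      thus "m \<in> {d}" using m d unfolding maxs_def by auto
    qed
    have "\<forall>z\<in>I. (d, z) \<in> r \<longrightarrow> z = d"
    proof (intro ballI impI)
      fix z assume z: "z \<in> I" "(d, z) \<in> r"
      hence "(z, d) \<in> r" using Id unfolding dn_def by auto
      thus "z = d" using z anti unfolding antisym_def by auto
    qed
    thus "{d} \<subseteq> maxs r I" using d unfolding maxs_def by auto
  qed
  define T where "T = (\<Prod>i\<in>I - {d}. \<tau> i)"
  have T: "T > 0" unfolding T_def using IX XO tau by (intro prod_pos) auto
  have dO: "d \<in> \<Omega>" using d IX XO by auto
  have e: "\<eta> d > -1" using eta dO by auto
  have "phi r \<tau> \<eta> D I = - T" unfolding phi_def ID M T_def using d by simp
  moreover have "phi r \<tau> \<eta> A I = T * \<eta> d" unfolding phi_def IA M T_def using d by (simp add: insert_Diff_if)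
  moreover have "- T < T * \<eta> d"
  proof -
    have "0 < T * (\<eta> d + 1)" using T e by simp
    thus ?thesis by (simp add: algebra_simps)
  qed
  ultimately show ?thesis by simp
qed

theorem theorem3p4:
  fixes \<Omega> :: "'a set" and r :: "('a \<times> 'a) set"
    and \<tau> \<eta> :: "'a \<Rightarrow> real" and X D A :: "'a set"
  assumes "finite \<Omega>" and "partial_order_on \<Omega> r"
    and "\<forall>i\<in>\<Omega>. \<tau> i > 0" and "\<forall>i\<in>\<Omega>. \<eta> i > -1" and "\<forall>i\<in>\<Omega>. \<eta> i \<noteq> 0"
    and "X \<subseteq> \<Omega>" and "D \<in> upsets r X" and "A \<in> upsets r X" and "A \<subset> D"
  shows "piP r \<tau> \<eta> X D \<noteq> piP r \<tau> \<eta> X A \<and> poly_prec (piP r \<tau> \<eta> X D) (piP r \<tau> \<eta> X A)"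
proof -
  let ?f = "piP r \<tau> \<eta> X D" and ?g = "piP r \<tau> \<eta> X A"
  have fX: "finite X" using assms(1,6) finite_subset by blast
  have DX: "D \<subseteq> X" and AX: "A \<subseteq> X" using assms(7,8) unfolding upsets_def by auto
  have rfl: "refl_on \<Omega> r" using assms(2) unfolding partial_order_on_def preorder_on_def by auto
  obtain d where d: "d \<in> D - A" using assms(9) by auto
  define S where "S = {I\<in>downsets r X. I \<inter> (D - A) \<noteq> {}}"
  have dd: "(d, d) \<in> r" using d DX assms(6) rfl unfolding refl_on_def by auto
  have dnS: "{j\<in>X. (j, d) \<in> r} \<in> S"
  proof -
    have "d \<in> {j\<in>X. (j, d) \<in> r} \<inter> (D - A)" using d DX dd by auto
    moreover have "{j\<in>X. (j, d) \<in> r} \<in> downsets r X"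
      using assms(2) unfolding downsets_def partial_order_on_def preorder_on_def
      by (auto dest: transD)
    ultimately show ?thesis unfolding S_def by auto
  qed
  have fS: "finite S" unfolding S_def using finite_downsets[OF fX] by auto
  define k0 where "k0 = Min (card ` S)"
  obtain I0 where I0: "I0 \<in> S" "card I0 = k0"
    using Min_in[of "card ` S"] fS dnS unfolding k0_def by fastforce
  have mn: "k0 \<le> card J" if "J \<in> S" for J using fS that unfolding k0_def by simp
  have low: "coeff ?f j = coeff ?g j" if "j < k0" for j
    unfolding coeff_piP[OF fX]
  proof (rule sum.cong[OF refl])
    fix I assume I: "I \<in> {I \<in> downsets r X. card I = j}"
    hence "I \<notin> S" using mn that by fastforce
    hence "I \<inter> (D - A) = {}" using I unfolding S_def by auto
    thus "phi r \<tau> \<eta> D I = phi r \<tau> \<eta> A I" using phi_eq assms(9) by blast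
  qed
  have at: "coeff ?f k0 < coeff ?g k0"
    unfolding coeff_piP[OF fX]
  proof (rule sum_strict_mono_ex1)
    show "finite {I \<in> downsets r X. card I = k0}" using finite_downsets[OF fX] by auto
    have lt: "phi r \<tau> \<eta> D I < phi r \<tau> \<eta> A I" if "I \<in> S" "card I = k0" for I
      using that assms(2-9) fX mn unfolding S_def
      by (intro phi_lt[where \<Omega>=\<Omega> and X=X]) auto
    show "\<forall>I\<in>{I \<in> downsets r X. card I = k0}. phi r \<tau> \<eta> D I \<le> phi r \<tau> \<eta> A I"
    proof
      fix I assume I: "I \<in> {I \<in> downsets r X. card I = k0}"
      show "phi r \<tau> \<eta> D I \<le> phi r \<tau> \<eta> A I"
      proof (cases "I \<in> S")
        case True thus ?thesis using lt I by fastforce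
      next
        case False
        hence "I \<inter> (D - A) = {}" using I unfolding S_def by auto
        thus ?thesis using phi_eq assms(9) by (metis order_refl psubset_imp_subset)
      qed
    qed
    show "\<exists>I\<in>{I \<in> downsets r X. card I = k0}. phi r \<tau> \<eta> D I < phi r \<tau> \<eta> A I"
      using I0 lt unfolding S_def by auto
  qed
  hence ne: "?f \<noteq> ?g" by auto
  define N where "N = (\<lambda>Y. card ((X - Y) \<union> mins r Y))"
  have degf: "degree ?f \<le> N D"
  proof (rule degree_le)
    show "\<forall>i>N D. coeff ?f i = 0"
    proof (intro allI impI)
      fix i assume i: "N D < i"
      show "coeff ?f i = 0" unfolding coeff_piP[OF fX]
      proof (rule sum.neutral, rule ballI, rule ccontr)
        fix I assume I: "I \<in> {I \<in> downsets r X. card I = i}" "phi r \<tau> \<eta> D I \<noteq> 0"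
        hence "I \<subseteq> (X - D) \<union> mins r D" using phi_nz_subset DX by blast
        hence "card I \<le> N D" unfolding N_def
          by (intro card_mono) (use finite_I0[OF fX DX] in auto)
        thus False using I i by auto
      qed
    qed
  qed
  have degg: "N A \<le> degree ?g"
  proof (rule le_degree)
    let ?J = "(X - A) \<union> mins r A"
    have "coeff ?g (N A) = (\<Sum>I\<in>{I \<in> downsets r X. card I = N A}. phi r \<tau> \<eta> A I)"
      by (rule coeff_piP[OF fX])
    also have "\<dots> = (\<Sum>I\<in>{?J}. phi r \<tau> \<eta> A I)"
    proof (rule sum.mono_neutral_left[symmetric])
      show "finite {I \<in> downsets r X. card I = N A}" using finite_downsets[OF fX] by auto
      show "{?J} \<subseteq> {I \<in> downsets r X. card I = N A}" using I0_downset[OF assms(8)] unfolding N_def by auto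
      show "\<forall>I\<in>{I \<in> downsets r X. card I = N A} - {?J}. phi r \<tau> \<eta> A I = 0"
      proof (rule ballI, rule ccontr)
        fix I assume I: "I \<in> {I \<in> downsets r X. card I = N A} - {?J}" "phi r \<tau> \<eta> A I \<noteq> 0"
        hence "I \<subseteq> ?J" using phi_nz_subset AX by blast
        moreover have "finite ?J" using finite_I0[OF fX AX] .
        moreover have "card I = card ?J" using I unfolding N_def by auto
        ultimately have "I = ?J" by (metis card_subset_eq)
        thus False using I by auto
      qed
    qed
    also have "\<dots> = phi r \<tau> \<eta> A ?J" by simp
    also have "\<dots> \<noteq> 0" using phi_I0_nz[OF assms(8,6,3,5) fX] .
    finally show "coeff ?g (N A) \<noteq> 0" .
  qed
  have NDA: "N D \<le> N A" unfolding N_def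
  proof (rule card_mono)
    show "finite ((X - A) \<union> mins r A)" using finite_I0[OF fX AX] .
    show "(X - D) \<union> mins r D \<subseteq> (X - A) \<union> mins r A"
      using assms(9) DX unfolding mins_def by auto
  qed
  have "poly_prec ?f ?g"
  proof (cases "degree ?f < degree ?g")
    case True thus ?thesis unfolding poly_prec_def by simp
  next
    case False
    hence "degree ?f = degree ?g" using degf degg NDA by linarith
    thus ?thesis unfolding poly_prec_def using at low by blast
  qed
  thus ?thesis using ne by simp
qed

end
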